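(* Let $\mathcal T=(V,E,o)$ be the deterministic rooted tree in which every vertex at distance $k\ge0$ from the root has exactly $4^k$ children. Fix $T\in(0,\infty)$ and a family of strictly positive constants $(C_{k,T})_{k\in\mathbb N}$, non-decreasing in $k$, and let $N^{T}_v(A):=N_v(A\times(0,C_{|\mathrm{cl}_v|,T}]\times\mathcal J)$ for Borel $A\subseteq[0,T]$, where $(N_v)_{v\in V}$ are i.i.d. Poisson random measures on $\mathbb R_+^2\times\mathcal J$ with intensity $\mathrm{Leb}^2\otimes\varsigma$ ($\varsigma$ a finite measure on the countable set $\mathcal J$ with $\varsigma(\mathcal J)>0$). Then with probability one there exists an infinite $(\mathcal T,N^T)$-causal chain.
   Context: $\mathrm{cl}_v$ denotes $v$ together with its neighbours. Causal chains: for an interval $[t_1,t_2]\subseteq[0,T]$ and vertices $u,v$, a causal chain from $v$ to $u$ during $[t_1,t_2]$ is a path $(v=u_0,u_1,\dots,u_n=u)$ in the graph (consecutive vertices adjacent, vertices distinct) such that, if $n\ge1$, there are times $t_1=s_0<s_1<\dots<s_n\le t_2$ with $N^T_{u_i}(\{s_i\})=1$ (i.e. $s_i$ is an atom of $N^T_{u_i}$) for $i=1,\dots,n$. An infinite causal chain ending at a vertex $u$ is an infinite path $(u=u_0,u_1,u_2,\dots)$ of distinct vertices such that for every $n\in\mathbb N$, $(u_n,u_{n-1},\dots,u_0)$ is a causal chain from $u_n$ to $u_0$ during $[0,T]$. *)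

theory Defs
  imports "HOL-Probability.Probability"
begin

text \<open>Vertices are the finite words xs with xs!i < 4^i for all i; the root is the empty
word, and the children of a vertex xs at depth k = length xs are xs@[j] for j < 4^k.\<close>

definition tree_V :: "nat list set" where
  "tree_V = {xs. \<forall>i<length xs. xs ! i < 4 ^ i}"

definition tree_adj :: "nat list \<Rightarrow> nat list \<Rightarrow> bool" where
  "tree_adj u v \<longleftrightarrow> u \<in> tree_V \<and> v \<in> tree_V \<and> (\<exists>j. v = u @ [j] \<or> u = v @ [j])"

definition tree_cl :: "nat list \<Rightarrow> nat list set" where
  "tree_cl v = insert v {u. tree_adj v u}"

definition poisson_rm :: "'w measure \<Rightarrow> 's measure \<Rightarrow> ('w \<Rightarrow> 's measure) \<Rightarrow> bool" where
  "poisson_rm M \<mu> N \<longleftrightarrow>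
     (\<forall>\<omega>\<in>space M. sets (N \<omega>) = sets \<mu>) \<and>
     (\<forall>A\<in>sets \<mu>. (\<lambda>\<omega>. emeasure (N \<omega>) A) \<in> borel_measurable M) \<and>
     (\<forall>A\<in>sets \<mu>. emeasure \<mu> A < \<infinity> \<longrightarrow>
        (\<forall>n::nat. measure M {\<omega>\<in>space M. emeasure (N \<omega>) A = of_nat n}
            = exp (- enn2real (emeasure \<mu> A)) * enn2real (emeasure \<mu> A) ^ n / fact n)) \<and>
     (\<forall>A\<in>sets \<mu>. emeasure \<mu> A = \<infinity> \<longrightarrow> (AE \<omega> in M. emeasure (N \<omega>) A = \<infinity>)) \<and>
     (\<forall>(I::nat set) A. finite I \<longrightarrow> A ` I \<subseteq> sets \<mu> \<longrightarrow> disjoint_family_on A I \<longrightarrow>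
        prob_space.indep_vars M (\<lambda>_. borel) (\<lambda>i \<omega>. emeasure (N \<omega>) (A i)) I)"

text \<open>Independence of a family of random measures (as random elements of the product
space of their evaluations on all measurable sets).\<close>

definition indep_rms :: "'w measure \<Rightarrow> 's measure \<Rightarrow> ('v \<Rightarrow> 'w \<Rightarrow> 's measure) \<Rightarrow> 'v set \<Rightarrow> bool" where
  "indep_rms M \<mu> N I \<longleftrightarrow>
     prob_space.indep_vars M (\<lambda>_. Pi\<^sub>M (sets \<mu>) (\<lambda>_. borel))
       (\<lambda>v \<omega>. \<lambda>A\<in>sets \<mu>. emeasure (N v \<omega>) A) I"

definition intensity :: "'j measure \<Rightarrow> (real \<times> real \<times> 'j) measure" where
  "intensity \<sigma> = restrict_space lborel {0..} \<Otimes>\<^sub>M (restrict_space lborel {0..} \<Otimes>\<^sub>M \<sigma>)"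

text \<open>atom v s means that s is an atom of the point measure N^T_v.\<close>

definition causal_chain ::
  "('v \<Rightarrow> 'v \<Rightarrow> bool) \<Rightarrow> ('v \<Rightarrow> real \<Rightarrow> bool) \<Rightarrow> real \<Rightarrow> real \<Rightarrow> 'v list \<Rightarrow> bool" where
  "causal_chain adj atom t1 t2 ws \<longleftrightarrow>
     ws \<noteq> [] \<and> distinct ws \<and> (\<forall>i. Suc i < length ws \<longrightarrow> adj (ws ! i) (ws ! Suc i)) \<and>
     (2 \<le> length ws \<longrightarrow>
        (\<exists>s::nat \<Rightarrow> real. s 0 = t1 \<and> (\<forall>i. Suc i < length ws \<longrightarrow> s i < s (Suc i)) \<and>
           s (length ws - 1) \<le> t2 \<and> (\<forall>i. 1 \<le> i \<and> i < length ws \<longrightarrow> atom (ws ! i) (s i))))"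

definition infinite_causal_chain ::
  "('v \<Rightarrow> 'v \<Rightarrow> bool) \<Rightarrow> ('v \<Rightarrow> real \<Rightarrow> bool) \<Rightarrow> real \<Rightarrow> 'v \<Rightarrow> (nat \<Rightarrow> 'v) \<Rightarrow> bool" where
  "infinite_causal_chain adj atom T u us \<longleftrightarrow>
     us 0 = u \<and> inj us \<and>
     (\<forall>n. causal_chain adj atom 0 T (rev (map us [0..<Suc n])))"

definition NT_atom :: "(nat \<Rightarrow> real) \<Rightarrow> (nat list \<Rightarrow> (real \<times> real \<times> 'j) measure) \<Rightarrow> nat list \<Rightarrow> real \<Rightarrow> bool" where
  "NT_atom C Nw v s \<longleftrightarrow>
     emeasure (Nw v) ({s} \<times> ({0<..C (card (tree_cl v))} \<times> UNIV)) = 1"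

end

theory Submission
  imports Defs "HOL-Real_Asymp.Real_Asymp"
begin


locale prm = prob_space M for M :: "'w measure" +
  fixes \<mu> :: "'s measure" and N :: "'w \<Rightarrow> 's measure"
  assumes prm: "poisson_rm M \<mu> N"
begin

lemma meas[measurable]: "A \<in> sets \<mu> \<Longrightarrow> (\<lambda>\<omega>. emeasure (N \<omega>) A) \<in> borel_measurable M"
  using prm unfolding poisson_rm_def by auto

lemma ev_eq[measurable]: "A \<in> sets \<mu> \<Longrightarrow> {\<omega>\<in>space M. emeasure (N \<omega>) A = x} \<in> sets M"
  by measurable

lemma pois: "A \<in> sets \<mu> \<Longrightarrow> emeasure \<mu> A < \<infinity> \<Longrightarrow>
  prob {\<omega>\<in>space M. emeasure (N \<omega>) A = of_nat n}
    = exp (- enn2real (emeasure \<mu> A)) * enn2real (emeasure \<mu> A) ^ n / fact n"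
  using prm unfolding poisson_rm_def by auto

lemma p0: "A \<in> sets \<mu> \<Longrightarrow> emeasure \<mu> A < \<infinity> \<Longrightarrow>
  prob {\<omega>\<in>space M. emeasure (N \<omega>) A = 0} = exp (- enn2real (emeasure \<mu> A))"
  using pois[of A 0] by simp

lemma nat_AE:
  assumes A: "A \<in> sets \<mu>" and fin: "emeasure \<mu> A < \<infinity>"
  shows "AE \<omega> in M. \<exists>n::nat. emeasure (N \<omega>) A = of_nat n"
proof -
  define c where "c = enn2real (emeasure \<mu> A)"
  define E where "E n = {\<omega>\<in>space M. emeasure (N \<omega>) A = of_nat n}" for n :: nat
  have Es: "E n \<in> sets M" for n unfolding E_def using A by measurable
  have disj: "disjoint_family E" unfolding disjoint_family_on_def E_def by auto
  have "(\<lambda>n. prob (E n)) sums prob (\<Union>n. E n)"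
    by (rule finite_measure_UNION) (use Es disj in auto)
  moreover have "(\<lambda>n. prob (E n)) = (\<lambda>n. exp (-c) * (c ^ n /\<^sub>R fact n))"
    using pois[OF A fin] unfolding E_def c_def by (auto simp: divide_simps)
  moreover have "(\<lambda>n. exp (-c) * (c ^ n /\<^sub>R fact n)) sums (exp (-c) * exp c)"
    by (intro sums_mult exp_converges)
  ultimately have "prob (\<Union>n. E n) = exp (-c) * exp c"
    using sums_unique2 by metis
  then have "prob (\<Union>n. E n) = 1" by (simp add: exp_minus[symmetric] exp_add[symmetric])
  then have "prob (space M - (\<Union>n. E n)) = 0"
    using Es by (subst prob_compl) auto
  then have "space M - (\<Union>n. E n) \<in> null_sets M"
    using Es by (auto simp: emeasure_eq_measure intro!: null_setsI)
  then show ?thesis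
    by (rule AE_I') (auto simp: E_def)
qed

lemma p2:
  assumes A: "A \<in> sets \<mu>" and fin: "emeasure \<mu> A < \<infinity>"
  shows "prob {\<omega>\<in>space M. 1 < emeasure (N \<omega>) A} \<le> (enn2real (emeasure \<mu> A))\<^sup>2"
proof -
  define c where "c = enn2real (emeasure \<mu> A)"
  have c0: "c \<ge> 0" unfolding c_def by simp
  define E where "E n = {\<omega>\<in>space M. emeasure (N \<omega>) A = of_nat n}" for n :: nat
  have Es: "E n \<in> sets M" for n unfolding E_def using A by measurable
  have sub: "{\<omega>\<in>space M. 1 < emeasure (N \<omega>) A} \<subseteq> space M - (E 0 \<union> E 1)"
    unfolding E_def by auto
  have "prob {\<omega>\<in>space M. 1 < emeasure (N \<omega>) A} \<le> prob (space M - (E 0 \<union> E 1))"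
    by (rule finite_measure_mono[OF sub]) (use Es in auto)
  also have "\<dots> = 1 - prob (E 0 \<union> E 1)"
    using Es by (subst prob_compl) auto
  also have "prob (E 0 \<union> E 1) = prob (E 0) + prob (E 1)"
    using Es[of 0] Es[of 1] by (intro finite_measure_Union) (auto simp: E_def)
  also have "prob (E 0) = exp (-c)" using pois[OF A fin, of 0] unfolding E_def c_def by simp
  also have "prob (E 1) = exp (-c) * c" using pois[OF A fin, of 1] unfolding E_def c_def by simp
  also have "1 - (exp (-c) + exp (-c) * c) \<le> c\<^sup>2"
  proof -
    have "1 - c \<le> exp (-c)" using exp_ge_add_one_self[of "-c"] by simp
    then have "(1 - c) * (1 + c) \<le> exp (-c) * (1 + c)"
      using c0 by (intro mult_right_mono) auto
    then show ?thesis by (simp add: algebra_simps power2_eq_square)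
  qed
  finally show ?thesis unfolding c_def .
qed

end


context
  fixes \<sigma> :: "'j measure"
  assumes fin: "finite_measure \<sigma>" and sp: "space \<sigma> = UNIV" and st: "sets \<sigma> = Pow UNIV"
begin

lemma R_sets: "X \<subseteq> {0..} \<Longrightarrow> X \<in> sets borel \<Longrightarrow> X \<in> sets (restrict_space lborel {0::real..})"
  by (subst sets_restrict_space_iff) auto

lemma R_emeasure: "X \<subseteq> {0..} \<Longrightarrow> emeasure (restrict_space lborel {0::real..}) X = emeasure lborel X"
  by (rule emeasure_restrict_space) auto

lemma R_sf: "sigma_finite_measure (restrict_space lborel {0::real..})"
  by (rule sigma_finite_measure_restrict_space) (auto simp: lborel.sigma_finite_measure_axioms)

lemma box_sets: "X \<subseteq> {0..} \<Longrightarrow> X \<in> sets borel \<Longrightarrow>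
   X \<times> ({0<..c} \<times> UNIV) \<in> sets (intensity \<sigma>)"
  unfolding intensity_def
  by (intro pair_measureI R_sets) (auto simp: st)

lemma box_emeasure: "X \<subseteq> {0..} \<Longrightarrow> X \<in> sets borel \<Longrightarrow> 0 \<le> c \<Longrightarrow>
   emeasure (intensity \<sigma>) (X \<times> ({0<..c} \<times> UNIV)) = emeasure lborel X * (ennreal c * emeasure \<sigma> UNIV)"
proof -
  assume X: "X \<subseteq> {0..}" "X \<in> sets borel" and c: "0 \<le> c"
  interpret sf1: sigma_finite_measure "restrict_space lborel {0::real..}" by (rule R_sf)
  interpret s2: finite_measure \<sigma> by (rule fin)
  interpret sf2: pair_sigma_finite "restrict_space lborel {0::real..}" \<sigma> by unfold_locales
  have sf3: "sigma_finite_measure (restrict_space lborel {0::real..} \<Otimes>\<^sub>M \<sigma>)"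
    by (intro sigma_finite_pair_measure R_sf) unfold_locales
  have "emeasure (intensity \<sigma>) (X \<times> ({0<..c} \<times> UNIV)) =
     emeasure (restrict_space lborel {0::real..}) X * emeasure (restrict_space lborel {0::real..} \<Otimes>\<^sub>M \<sigma>) ({0<..c} \<times> UNIV)"
    unfolding intensity_def
    by (intro sigma_finite_measure.emeasure_pair_measure_Times[OF sf3] R_sets X pair_measureI) (auto simp: st)
  also have "emeasure (restrict_space lborel {0::real..} \<Otimes>\<^sub>M \<sigma>) ({0<..c} \<times> UNIV)
      = emeasure (restrict_space lborel {0::real..}) {0<..c} * emeasure \<sigma> UNIV"
    by (intro s2.emeasure_pair_measure_Times R_sets) (auto simp: st)
  also have "emeasure (restrict_space lborel {0::real..}) {0<..c} = ennreal c"
    using c by (subst R_emeasure) auto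
  finally show ?thesis using X c by (simp add: R_emeasure)
qed

lemma box_emeasure_Ioc: "0 \<le> l \<Longrightarrow> l \<le> r \<Longrightarrow> 0 \<le> c \<Longrightarrow>
   emeasure (intensity \<sigma>) ({l<..r} \<times> ({0<..c} \<times> UNIV)) = ennreal ((r - l) * c * enn2real (emeasure \<sigma> UNIV))"
  using finite_measure.emeasure_finite[OF fin, of UNIV]
  by (subst box_emeasure) (auto simp: ennreal_mult' ennreal_enn2real_if mult.assoc top.not_eq_extremum)

end


context
  fixes \<sigma> :: "'j measure"
  assumes fin: "finite_measure \<sigma>" and sp: "space \<sigma> = UNIV" and st: "sets \<sigma> = Pow UNIV"
begin

lemma atom_det:
  fixes \<nu> :: "(real \<times> real \<times> 'j) measure"
  assumes s\<nu>: "sets \<nu> = sets (intensity \<sigma>)" and a0: "0 \<le> a" and ab: "a < b"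
  and h1: "1 \<le> emeasure \<nu> ({a<..b} \<times> ({0<..c} \<times> UNIV))"
  and h2: "emeasure \<nu> ({a<..b} \<times> ({0<..c} \<times> UNIV)) < \<infinity>"
  and h3: "\<forall>q\<in>\<rat>. 0 \<le> q \<longrightarrow> q \<le> 1 \<longrightarrow>
      (\<exists>m::nat. emeasure \<nu> ({a<..a+(b-a)*q} \<times> ({0<..c} \<times> UNIV)) = of_nat m)"
  and n1: "(n::nat) \<ge> 1"
  and h4: "\<forall>k<n. emeasure \<nu> ({a+(b-a)*real k/real n<..a+(b-a)*(real k+1)/real n} \<times> ({0<..c} \<times> UNIV)) \<le> 1"
  shows "\<exists>s. a < s \<and> s \<le> b \<and> emeasure \<nu> ({s} \<times> ({0<..c} \<times> UNIV)) = 1"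
proof -
  define B where "B = ({0<..c} \<times> (UNIV :: 'j set))"
  have msr: "X \<times> B \<in> sets \<nu>" if "X \<subseteq> {0..}" "X \<in> sets borel" for X
    unfolding s\<nu> B_def by (rule box_sets[OF fin sp st that])
  define F where "F t = emeasure \<nu> ({a<..t} \<times> B)" for t
  have Fm: "t \<le> t' \<Longrightarrow> F t \<le> F t'" for t t'
    unfolding F_def using a0 by (intro emeasure_mono msr) auto
  have Fin: "t \<le> b \<Longrightarrow> F t < \<infinity>" for t
    using Fm[of t b] h2 unfolding F_def B_def by auto
  define Z where "Z = {t. a \<le> t \<and> t \<le> b \<and> 1 \<le> F t}"
  define s where "s = Inf Z"
  have bZ: "b \<in> Z" using h1 ab unfolding Z_def F_def B_def by auto
  have bdd: "bdd_below Z" unfolding Z_def by (auto intro: bdd_belowI[of _ a])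
  have sb: "s \<le> b" unfolding s_def by (rule cInf_lower[OF bZ bdd])
  have as: "a \<le> s" unfolding s_def using bZ by (intro cInf_greatest) (auto simp: Z_def)
  have lt1: "F t < 1" if "a \<le> t" "t < s" for t
  proof (rule ccontr)
    assume "\<not> F t < 1"
    then have "t \<in> Z" using that sb unfolding Z_def by auto
    then have "s \<le> t" unfolding s_def by (rule cInf_lower[OF _ bdd])
    then show False using that by simp
  qed
  have zero: "F t = 0" if "a \<le> t" "t < s" for t
  proof -
    have "(t - a) / (b - a) < (s - a) / (b - a)" using that ab by (intro divide_strict_right_mono) auto
    then obtain q where q: "q \<in> \<rat>" "(t - a) / (b - a) < q" "q < (s - a) / (b - a)"
      using Rats_dense_in_real by blast
    have q0: "0 \<le> q" using q(2) that ab by (smt (verit) divide_nonneg_pos)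
    have q1: "q \<le> 1" using q(3) sb ab by (smt (verit, del_insts) divide_le_eq_1_pos)
    define g where "g = a + (b - a) * q"
    have tg: "t < g" using q(2) ab unfolding g_def by (simp add: pos_divide_less_eq algebra_simps)
    have gs: "g < s" using q(3) ab unfolding g_def by (simp add: pos_less_divide_eq algebra_simps)
    obtain m :: nat where m: "F g = of_nat m" using h3 q q0 q1 unfolding F_def B_def g_def by blast
    have "F g < 1" using lt1[of g] tg that gs by auto
    then have "m = 0" using m by (cases m) auto
    then have "F g = 0" using m by simp
    then show ?thesis using Fm[of t g] tg by auto
  qed
  have null_open: "{a<..<s} \<times> B \<in> null_sets \<nu>"
  proof -
    have eq: "{a<..<s} \<times> B = (\<Union>i. {a<..s - 1 / Suc i} \<times> B)"
    proof -
      have "(x, y) \<in> (\<Union>i. {a<..s - 1 / Suc i} \<times> B)" if xs: "x \<in> {a<..<s}" "y \<in> B" for x y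
      proof -
        obtain i where "1 / Suc i < s - x" using reals_Archimedean[of "s - x"] xs
          by (auto simp: inverse_eq_divide)
        then show ?thesis using xs by (intro UN_I[of i]) auto
      qed
      moreover have "x \<in> {a<..<s} \<and> y \<in> B" if "(x, y) \<in> {a<..s - 1 / Suc i} \<times> B" for x y i
      proof -
        have 1: "a < x" "x \<le> s - 1 / Suc i" "y \<in> B" using that by auto
        have p: "0 < 1 / real (Suc i)" by simp
        have "x < s" using 1(2) p by linarith
        with 1 show ?thesis by auto
      qed
      ultimately show ?thesis by fast
    qed
    have "{a<..s - 1 / Suc i} \<times> B \<in> null_sets \<nu>" for i
    proof (cases "a \<le> s - 1 / Suc i")
      case True
      have "F (s - 1 / Suc i) = 0" using True by (intro zero) auto
      then show ?thesis using a0 by (auto simp: F_def null_sets_def intro!: msr)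
    next
      case False
      then have "{a<..s - 1 / Suc i} = {}" by auto
      then show ?thesis by simp
    qed
    then show ?thesis unfolding eq by (intro null_sets_UN) auto
  qed
  have Fs: "1 \<le> F s"
  proof -
    define D where "D i = {a<..min b (s + 1 / Suc i)} \<times> B" for i
    have Ds: "range D \<subseteq> sets \<nu>" unfolding D_def using a0 by (auto intro!: msr)
    have im: "1 / (1 + real y) \<le> 1 / (1 + real x)" if "x \<le> y" for x y :: nat
      using that by (intro divide_left_mono) auto
    have Dmono: "antimono_on UNIV D" unfolding D_def monotone_on_def
      by (auto intro: order_trans[OF _ add_left_mono[OF im]])
    have Dfin: "emeasure \<nu> (D i) \<noteq> \<infinity>" for i
      using Fin[of "min b (s + 1 / Suc i)"] unfolding D_def F_def by auto
    have Dge: "1 \<le> emeasure \<nu> (D i)" for i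
    proof (cases "s < b")
      case True
      define t where "t = min b (s + 1 / Suc i)"
      have "s < t" using True unfolding t_def by auto
      then obtain z where z: "z \<in> Z" "z < t" unfolding s_def using bZ cInf_less_iff[OF _ bdd, of t] by blast
      then have "1 \<le> F z" unfolding Z_def by auto
      also have "F z \<le> F t" using z by (intro Fm) auto
      finally show ?thesis unfolding D_def F_def t_def .
    next
      case False
      then have "min b (s + 1 / Suc i) = b" using sb by auto
      then show ?thesis using h1 unfolding D_def B_def by simp
    qed
    have "(\<Inter>i. D i) = {a<..s} \<times> B"
    proof -
      have "x \<le> s \<and> a < x \<and> y \<in> B" if H: "(x, y) \<in> (\<Inter>i. D i)" for x y
      proof -
        have 1: "y \<in> B" "a < x" using H unfolding D_def by auto
        have "x \<le> s"
        proof (rule ccontr)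
          assume "\<not> x \<le> s"
          then obtain i where i: "1 / Suc i < x - s" using reals_Archimedean[of "x - s"]
            by (auto simp: inverse_eq_divide)
          have "x \<le> s + 1 / Suc i" using H unfolding D_def by auto
          then show False using i by simp
        qed
        then show ?thesis using 1 by auto
      qed
      note A = this
      have Bq: "(x, y) \<in> D i" if "x \<in> {a<..s}" "y \<in> B" for x y i
      proof -
        have t0: "0 \<le> 1 / real (Suc i)" by simp
        have x1: "x \<le> s" using that by auto
        have "x \<le> s + 1 / real (Suc i)" using x1 t0 by linarith
        moreover have "x \<le> b" using x1 sb by linarith
        ultimately have "x \<le> min b (s + 1 / real (Suc i))" by (simp del: of_nat_Suc)
        then show ?thesis using that unfolding D_def by auto
      qed
      show ?thesis
      proof (rule set_eqI)
        fix p :: "real \<times> real \<times> 'j"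
        obtain x y where p: "p = (x, y)" by (cases p)
        show "p \<in> (\<Inter>i. D i) \<longleftrightarrow> p \<in> {a<..s} \<times> B"
          unfolding p
        proof
          assume "(x, y) \<in> (\<Inter>i. D i)"
          then have "x \<le> s \<and> a < x \<and> y \<in> B" by (rule A)
          then show "(x, y) \<in> {a<..s} \<times> B" by simp
        next
          assume "(x, y) \<in> {a<..s} \<times> B"
          then have "x \<in> {a<..s}" "y \<in> B" by auto
          then show "(x, y) \<in> (\<Inter>i. D i)" using Bq by blast
        qed
      qed
    qed
    then have "F s = (INF i. emeasure \<nu> (D i))"
      unfolding F_def using INF_emeasure_decseq[OF Ds Dmono Dfin] by simp
    then show ?thesis using Dge by (auto intro: INF_greatest)
  qed
  have as': "a < s"
  proof (rule ccontr)
    assume "\<not> a < s"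
    then have "s = a" using as by auto
    then have "F s = 0" unfolding F_def by simp
    then show False using Fs by simp
  qed
  have atom_ge: "1 \<le> emeasure \<nu> ({s} \<times> B)"
  proof -
    have "{a<..s} \<times> B = ({a<..<s} \<times> B) \<union> ({s} \<times> B)" using as' by auto
    then have "F s = emeasure \<nu> ({a<..<s} \<times> B) + emeasure \<nu> ({s} \<times> B)"
      unfolding F_def using a0 as' by (subst plus_emeasure) (auto intro!: msr)
    also have "emeasure \<nu> ({a<..<s} \<times> B) = 0" using null_open by auto
    finally show ?thesis using Fs by simp
  qed
  have atom_le: "emeasure \<nu> ({s} \<times> B) \<le> 1"
  proof -
    define x where "x = (s - a) * n / (b - a)"
    have x0: "0 < x" unfolding x_def using as' ab n1 by auto
    have xn: "x \<le> n" unfolding x_def using sb ab as' n1 by (simp add: divide_le_eq mult_right_mono)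
    define k where "k = nat (ceiling x) - 1"
    have ck: "real k < x" "x \<le> real k + 1" unfolding k_def using x0
      by (auto simp: of_nat_diff) linarith+
    have kn: "k < n" using ck xn by linarith
    have "a + (b - a) * k / n < s" using ck(1) ab n1 unfolding x_def
      by (simp add: field_simps)
    moreover have "s \<le> a + (b - a) * (k + 1) / n" using ck(2) ab n1 unfolding x_def
      by (simp add: field_simps)
    ultimately have "{s} \<times> B \<subseteq> {a+(b-a)*k/n<..a+(b-a)*(k+1)/n} \<times> B" by auto
    then have "emeasure \<nu> ({s} \<times> B) \<le> emeasure \<nu> ({a+(b-a)*k/n<..a+(b-a)*(k+1)/n} \<times> B)"
    proof (intro emeasure_mono msr)
      have "0 \<le> (b - a) * real k / real n" using ab by simp
      then show "{a+(b-a)*k/n<..a+(b-a)*(k+1)/n} \<subseteq> {0..}" using a0 by auto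
    qed auto
    also have "\<dots> \<le> 1" using h4 kn unfolding B_def by (simp add: add.commute)
    finally show ?thesis .
  qed
  show ?thesis using atom_ge atom_le as' sb unfolding B_def by (intro exI[of _ s]) auto
qed

end


locale prmI = prm M "intensity \<sigma>" N for M :: "'w measure" and \<sigma> :: "'j measure" and N +
  assumes fin: "finite_measure \<sigma>" and sp: "space \<sigma> = UNIV" and st: "sets \<sigma> = Pow UNIV"
begin

lemma sets_N: "\<omega> \<in> space M \<Longrightarrow> sets (N \<omega>) = sets (intensity \<sigma>)"
  using prm unfolding poisson_rm_def by auto

definition "\<sigma>0 = enn2real (emeasure \<sigma> UNIV)"

lemma \<sigma>0: "0 \<le> \<sigma>0" unfolding \<sigma>0_def by simp

lemma box_sets_Ioc: "0 \<le> l \<Longrightarrow> {l<..r} \<times> ({0<..c} \<times> UNIV) \<in> sets (intensity \<sigma>)"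
  by (rule box_sets[OF fin sp st]) auto

lemma box_meas_Ioc: "0 \<le> l \<Longrightarrow> l \<le> r \<Longrightarrow> 0 \<le> c \<Longrightarrow>
  emeasure (intensity \<sigma>) ({l<..r} \<times> ({0<..c} \<times> UNIV)) = ennreal ((r - l) * c * \<sigma>0)"
  unfolding \<sigma>0_def by (rule box_emeasure_Ioc[OF fin sp st])

lemma atom_AE:
  assumes a0: "0 \<le> a" and ab: "a < b" and c0: "0 \<le> c"
  shows "AE \<omega> in M. emeasure (N \<omega>) ({a<..b} \<times> ({0<..c} \<times> UNIV)) \<noteq> 0 \<longrightarrow>
     (\<exists>s. a < s \<and> s \<le> b \<and> emeasure (N \<omega>) ({s} \<times> ({0<..c} \<times> UNIV)) = 1)"
proof -
  define B where "B = ({0<..c} \<times> (UNIV :: 'j set))"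
  have AE1: "AE \<omega> in M. \<forall>q\<in>\<rat>. 0 \<le> q \<longrightarrow> q \<le> 1 \<longrightarrow>
      (\<exists>m::nat. emeasure (N \<omega>) ({a<..a+(b-a)*q} \<times> B) = of_nat m)"
  proof (rule AE_ball_countable'[OF _ countable_rat])
    fix q :: real assume "q \<in> \<rat>"
    show "AE \<omega> in M. 0 \<le> q \<longrightarrow> q \<le> 1 \<longrightarrow>
      (\<exists>m::nat. emeasure (N \<omega>) ({a<..a+(b-a)*q} \<times> B) = of_nat m)"
    proof (cases "0 \<le> q")
      case True
      have "AE \<omega> in M. (\<exists>m::nat. emeasure (N \<omega>) ({a<..a+(b-a)*q} \<times> B) = of_nat m)"
        unfolding B_def
        using True ab a0 c0 by (intro nat_AE box_sets_Ioc) (auto simp: box_meas_Ioc)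
      then show ?thesis by auto
    qed auto
  qed
  define lam where "lam = (b - a) * c * \<sigma>0"
  have lam0: "0 \<le> lam" unfolding lam_def using ab c0 \<sigma>0 by auto
  define P where "P n k = {a+(b-a)*real k/real n<..a+(b-a)*(real k+1)/real n} \<times> B" for n k :: nat
  have Pl: "0 \<le> a+(b-a)*real k/real n" for n k using a0 ab by simp
  have Plr: "a+(b-a)*real k/real n \<le> a+(b-a)*(real k+1)/real n" for n k using ab
    by (simp add: divide_right_mono mult_left_mono)
  have Ps: "P n k \<in> sets (intensity \<sigma>)" for n k unfolding P_def B_def by (rule box_sets_Ioc[OF Pl])
  have Pm: "emeasure (intensity \<sigma>) (P n k) = ennreal (lam / n)" if "n \<ge> 1" for n k
  proof -
    have "emeasure (intensity \<sigma>) (P n k) = ennreal ((a+(b-a)*(real k+1)/real n - (a+(b-a)*real k/real n)) * c * \<sigma>0)"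
      unfolding P_def B_def by (rule box_meas_Ioc[OF Pl Plr c0])
    also have "(a+(b-a)*(real k+1)/real n - (a+(b-a)*real k/real n)) * c * \<sigma>0 = lam / n"
      unfolding lam_def using that by (simp add: field_simps)
    finally show ?thesis .
  qed
  define Bad where "Bad n = (\<Union>k<n. {\<omega>\<in>space M. 1 < emeasure (N \<omega>) (P n k)})" for n :: nat
  have Bads: "Bad n \<in> sets M" for n unfolding Bad_def using Ps by measurable
  have Badp: "prob (Bad n) \<le> lam\<^sup>2 / n" if "n \<ge> 1" for n
  proof -
    have "prob (Bad n) \<le> (\<Sum>k<n. prob {\<omega>\<in>space M. 1 < emeasure (N \<omega>) (P n k)})"
      unfolding Bad_def by (intro finite_measure_subadditive_finite) (use Ps in auto)
    also have "\<dots> \<le> (\<Sum>k<n. (lam / n)\<^sup>2)"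
    proof (intro sum_mono)
      fix k assume "k \<in> {..<n}"
      have "prob {\<omega>\<in>space M. 1 < emeasure (N \<omega>) (P n k)} \<le> (enn2real (emeasure (intensity \<sigma>) (P n k)))\<^sup>2"
        using Pm[OF that] by (intro p2 Ps) auto
      also have "\<dots> = (lam / n)\<^sup>2" using Pm[OF that] lam0 by simp
      finally show "prob {\<omega>\<in>space M. 1 < emeasure (N \<omega>) (P n k)} \<le> (lam / n)\<^sup>2" .
    qed
    also have "\<dots> = lam\<^sup>2 / n" using that by (simp add: power2_eq_square)
    finally show ?thesis .
  qed
  define NB where "NB = (\<Inter>n. Bad (Suc n))"
  have NBs: "NB \<in> sets M" unfolding NB_def using Bads by auto
  have NBp: "prob NB = 0"
  proof (rule ccontr)
    assume "prob NB \<noteq> 0"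
    then have pos: "0 < prob NB" by (simp add: zero_less_measure_iff)
    obtain n :: nat where n: "lam\<^sup>2 / prob NB < n" using reals_Archimedean2 by blast
    have "prob NB \<le> prob (Bad (Suc n))" unfolding NB_def
      by (intro finite_measure_mono Bads) auto
    also have "\<dots> \<le> lam\<^sup>2 / Suc n" by (rule Badp) auto
    also have "\<dots> < prob NB"
    proof -
      have "lam\<^sup>2 < real n * prob NB" using n pos by (simp add: pos_divide_less_eq)
      also have "\<dots> \<le> real (Suc n) * prob NB" using pos by (intro mult_right_mono) auto
      finally have "lam\<^sup>2 < prob NB * real (Suc n)" by (simp add: mult.commute)
      then show ?thesis by (subst pos_divide_less_eq) auto
    qed
    finally show False by simp
  qed
  have AE2: "AE \<omega> in M. \<exists>n::nat. n \<ge> 1 \<and> (\<forall>k<n. emeasure (N \<omega>) (P n k) \<le> 1)"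
  proof (rule AE_I'[of NB])
    show "NB \<in> null_sets M" using NBs NBp by (auto simp: emeasure_eq_measure intro!: null_setsI)
    show "{\<omega> \<in> space M. \<not> (\<exists>n::nat. n \<ge> 1 \<and> (\<forall>k<n. emeasure (N \<omega>) (P n k) \<le> 1))} \<subseteq> NB"
    proof
      fix \<omega> assume H: "\<omega> \<in> {\<omega> \<in> space M. \<not> (\<exists>n::nat. n \<ge> 1 \<and> (\<forall>k<n. emeasure (N \<omega>) (P n k) \<le> 1))}"
      have "\<omega> \<in> Bad (Suc n)" for n
        using H[simplified, THEN conjunct2, rule_format, of "Suc n"] H unfolding Bad_def
        by (auto simp: not_le)
      then show "\<omega> \<in> NB" unfolding NB_def by auto
    qed
  qed
  show ?thesis
    using AE1 AE2 AE_space
  proof (eventually_elim)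
    case (elim \<omega>)
    show ?case
    proof
      assume ne: "emeasure (N \<omega>) ({a<..b} \<times> ({0<..c} \<times> UNIV)) \<noteq> 0"
      obtain m :: nat where m: "emeasure (N \<omega>) ({a<..b} \<times> B) = of_nat m"
        using elim(1)[rule_format, of 1] by auto
      have m0: "m \<noteq> 0" using m ne unfolding B_def by auto
      obtain n :: nat where n: "n \<ge> 1" "\<forall>k<n. emeasure (N \<omega>) (P n k) \<le> 1" using elim(2) by auto
      have "\<omega> \<in> space M" using elim(3) by simp
      show "\<exists>s. a < s \<and> s \<le> b \<and> emeasure (N \<omega>) ({s} \<times> ({0<..c} \<times> UNIV)) = 1"
      proof (rule atom_det[OF fin sp st sets_N[OF \<open>\<omega> \<in> space M\<close>] a0 ab])
        show "1 \<le> emeasure (N \<omega>) ({a<..b} \<times> ({0<..c} \<times> UNIV))"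
          using m m0 unfolding B_def by (cases m) auto
        show "emeasure (N \<omega>) ({a<..b} \<times> ({0<..c} \<times> UNIV)) < \<infinity>"
          using m unfolding B_def by (auto simp: of_nat_less_top)
        show "\<forall>q\<in>\<rat>. 0 \<le> q \<longrightarrow> q \<le> 1 \<longrightarrow>
          (\<exists>m::nat. emeasure (N \<omega>) ({a<..a+(b-a)*q} \<times> ({0<..c} \<times> UNIV)) = of_nat m)"
          using elim(1) unfolding B_def .
        show "n \<ge> 1" by fact
        show "\<forall>k<n. emeasure (N \<omega>) ({a+(b-a)*real k/real n<..a+(b-a)*(real k+1)/real n} \<times> ({0<..c} \<times> UNIV)) \<le> 1"
          using n(2) unfolding P_def B_def .
      qed
    qed
  qed
qed

end


lemma indep_zero:
  fixes M :: "'w measure" and \<mu> :: "'s measure" and N :: "'v \<Rightarrow> 'w \<Rightarrow> 's measure"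
  assumes P: "prob_space M" and ind: "indep_rms M \<mu> N V"
    and X: "\<And>v. v \<in> V \<Longrightarrow> X v \<in> sets \<mu>"
    and F: "finite F" "F \<noteq> {}" "F \<subseteq> V"
  shows "measure M {\<omega>\<in>space M. \<forall>v\<in>F. emeasure (N v \<omega>) (X v) = 0}
       = (\<Prod>v\<in>F. measure M {\<omega>\<in>space M. emeasure (N v \<omega>) (X v) = 0})"
proof -
  interpret prob_space M by (rule P)
  have "indep_vars (\<lambda>_. borel) (\<lambda>v \<omega>. (\<lambda>f. f (X v)) ((\<lambda>A\<in>sets \<mu>. emeasure (N v \<omega>) A))) V"
    using ind unfolding indep_rms_def
    by (rule indep_vars_compose2) (rule measurable_component_singleton[OF X])
  moreover have "(\<lambda>v \<omega>. (\<lambda>f. f (X v)) ((\<lambda>A\<in>sets \<mu>. emeasure (N v \<omega>) A))) v = (\<lambda>\<omega>. emeasure (N v \<omega>) (X v))"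
    if "v \<in> V" for v using X[OF that] by auto
  ultimately have iv: "indep_vars (\<lambda>_. borel) (\<lambda>v \<omega>. emeasure (N v \<omega>) (X v)) V"
    by (subst (asm) indep_vars_cong) auto
  then have isets: "indep_sets (\<lambda>v. {(\<lambda>\<omega>. emeasure (N v \<omega>) (X v)) -` S \<inter> space M | S. S \<in> sets borel}) V"
    unfolding indep_vars_def2 by auto
  define E where "E v = (\<lambda>\<omega>. emeasure (N v \<omega>) (X v)) -` {0} \<inter> space M" for v
  have "prob (\<Inter>v\<in>F. E v) = (\<Prod>v\<in>F. prob (E v))"
    by (rule indep_setsD[OF isets F(3) F(2) F(1)]) (auto simp: E_def)
  moreover have "(\<Inter>v\<in>F. E v) = {\<omega>\<in>space M. \<forall>v\<in>F. emeasure (N v \<omega>) (X v) = 0}"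
    using F(2) unfolding E_def by auto
  moreover have "E v = {\<omega>\<in>space M. emeasure (N v \<omega>) (X v) = 0}" for v
    unfolding E_def by auto
  ultimately show ?thesis by simp
qed

definition D :: "nat \<Rightarrow> nat list set" where "D k = {xs\<in>tree_V. length xs = k}"

lemma child_in: "v \<in> tree_V \<Longrightarrow> j < 4 ^ length v \<Longrightarrow> v @ [j] \<in> tree_V"
  unfolding tree_V_def by (auto simp: nth_append less_Suc_eq)

lemma child_adj: "v \<in> tree_V \<Longrightarrow> j < 4 ^ length v \<Longrightarrow> tree_adj (v @ [j]) v"
  unfolding tree_adj_def using child_in by auto

lemma D_Suc: "D (Suc k) \<subseteq> (\<lambda>(xs, j). xs @ [j]) ` (D k \<times> {..<4 ^ k})"
proof
  fix ys assume "ys \<in> D (Suc k)"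
  then have ys: "ys \<in> tree_V" "length ys = Suc k" unfolding D_def by auto
  then obtain xs j where xs: "ys = xs @ [j]" by (metis length_Suc_conv_rev)
  have "xs \<in> tree_V" unfolding tree_V_def
  proof (intro CollectI allI impI)
    fix i assume i: "i < length xs"
    then have "(xs @ [j]) ! i < 4 ^ i" using ys unfolding xs tree_V_def by auto
    then show "xs ! i < 4 ^ i" using i by (simp add: nth_append)
  qed
  moreover have "j < 4 ^ k" using ys unfolding xs tree_V_def
    by (auto dest!: spec[of _ k])
  ultimately show "ys \<in> (\<lambda>(xs, j). xs @ [j]) ` (D k \<times> {..<4 ^ k})"
    using ys unfolding xs D_def by force
qed

lemma D_fin_card: "finite (D k) \<and> card (D k) \<le> 4 ^ (k * k)"
proof (induction k)
  case 0
  have "D 0 = {[]}" unfolding D_def tree_V_def by auto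
  then show ?case by simp
next
  case (Suc k)
  have fin: "finite ((\<lambda>(xs, j). xs @ [j]) ` (D k \<times> {..<4 ^ k}))" using Suc by auto
  have "card (D (Suc k)) \<le> card ((\<lambda>(xs, j). xs @ [j]) ` (D k \<times> {..<(4::nat) ^ k}))"
    by (rule card_mono[OF fin D_Suc])
  also have "\<dots> \<le> card (D k \<times> {..<(4::nat) ^ k})" by (rule card_image_le) (use Suc in auto)
  also have "\<dots> = card (D k) * 4 ^ k" by (simp add: card_cartesian_product)
  also have "\<dots> \<le> 4 ^ (k * k) * 4 ^ k" using Suc by (intro mult_right_mono) auto
  also have "\<dots> \<le> 4 ^ (Suc k * Suc k)" unfolding power_add[symmetric] by (rule power_increasing) auto
  finally show ?case using finite_subset[OF D_Suc fin] by simp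
qed

lemma summ:
  fixes \<kappa> :: real assumes k: "\<kappa> > 0"
  shows "summable (\<lambda>k::nat. 4 ^ (k * k) * exp (- \<kappa> * 2 ^ k / 4))"
proof -
  have lim: "((\<lambda>x::real. 4 powr (x^2) * exp(-\<kappa>* 2 powr x/4) * 2 powr x) \<longlongrightarrow> 0) at_top"
    using k by real_asymp
  have "((\<lambda>k::nat. 4 powr (real k^2) * exp(-\<kappa>* 2 powr real k/4) * 2 powr real k) \<longlongrightarrow> 0) sequentially"
    by (rule filterlim_compose[OF lim filterlim_real_sequentially])
  then have ev: "eventually (\<lambda>k::nat. 4 powr (real k^2) * exp(-\<kappa>* 2 powr real k/4) * 2 powr real k < 1) sequentially"
    by (rule order_tendstoD) simp
  show ?thesis
  proof (rule summable_comparison_test_ev[OF _ summable_geometric[of "1/2::real"]])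
    show "eventually (\<lambda>k::nat. norm (4 ^ (k * k) * exp (- \<kappa> * 2 ^ k / 4)) \<le> (1 / 2) ^ k) sequentially"
      using ev
    proof eventually_elim
      case (elim k)
      have e: "4 powr (real k^2) * exp(-\<kappa>* 2 powr real k/4) * 2 powr real k
           = 4 ^ (k * k) * exp (- \<kappa> * 2 ^ k / 4) * 2 ^ k"
        by (simp add: powr_realpow power2_eq_square flip: of_nat_mult)
      have "4 ^ (k * k) * exp (- \<kappa> * 2 ^ k / 4) * 2 ^ k \<le> (1::real)" using elim e by simp
      then have "4 ^ (k * k) * exp (- \<kappa> * 2 ^ k / 4) \<le> 1 / 2 ^ k"
        by (simp add: field_simps)
      then show ?case by (simp add: power_one_over)
    qed
  qed simp
qed


theorem mainTheorem12:
  fixes M :: "'w measure"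
    and \<sigma> :: "'j::countable measure"
    and N :: "nat list \<Rightarrow> 'w \<Rightarrow> (real \<times> real \<times> 'j) measure"
    and T :: real
    and C :: "nat \<Rightarrow> real"
  assumes "prob_space M"
    and "T > 0"
    and "\<And>k. C k > 0"
    and "mono C"
    and "finite_measure \<sigma>"
    and "space \<sigma> = UNIV" and "sets \<sigma> = Pow UNIV"
    and "emeasure \<sigma> UNIV > 0"
    and "\<And>v. v \<in> tree_V \<Longrightarrow> poisson_rm M (intensity \<sigma>) (N v)"
    and "indep_rms M (intensity \<sigma>) N tree_V"
  shows "AE \<omega> in M. \<exists>u us. u \<in> tree_V \<and>
           infinite_causal_chain tree_adj (\<lambda>v s. NT_atom C (\<lambda>x. N x \<omega>) v s) T u us"
proof -
  note Pm = assms(1) and T0 = assms(2) and Cpos = assms(3) and Cmono = assms(4)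
    and fin = assms(5) and sp = assms(6) and st = assms(7) and spos = assms(8)
    and pois = assms(9) and ind = assms(10)
  interpret P: prob_space M by (rule Pm)
  have prmI: "prmI M \<sigma> (N v)" if "v \<in> tree_V" for v
    unfolding prmI_def prm_def prmI_axioms_def prm_axioms_def using Pm pois[OF that] fin sp st by auto
  define \<sigma>0 where "\<sigma>0 = enn2real (emeasure \<sigma> UNIV)"
  have \<sigma>0pos: "0 < \<sigma>0"
    using spos finite_measure.emeasure_finite[OF fin, of UNIV] unfolding \<sigma>0_def
    by (simp add: enn2real_positive_iff top.not_eq_extremum)
  define lo where "lo d = T / 2 ^ Suc d" for d :: nat
  define hi where "hi d = T / 2 ^ d" for d :: nat
  have lo0: "0 < lo d" for d unfolding lo_def using T0 by simp
  have lohi: "lo d < hi d" for d unfolding lo_def hi_def using T0 by (simp add: divide_strict_left_mono)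
  have hiSuc: "hi (Suc d) = lo d" for d unfolding lo_def hi_def by simp
  have hiT: "hi d \<le> T" for d unfolding hi_def using T0 by (simp add: divide_le_eq)
  have hilo: "hi d - lo d = T / 2 ^ Suc d" for d unfolding hi_def lo_def by (simp add: field_simps)
  define cv where "cv v = C (card (tree_cl v))" for v
  have cv0: "C 0 \<le> cv v" for v unfolding cv_def using Cmono by (simp add: monoD)
  have cvpos: "0 < cv v" for v unfolding cv_def using Cpos by simp
  define A where "A v = {lo (length v)<..hi (length v)} \<times> ({0<..cv v} \<times> (UNIV :: 'j set))" for v
  have Asets: "A v \<in> sets (intensity \<sigma>)" for v
    unfolding A_def using lo0[of "length v"] by (intro box_sets[OF fin sp st]) auto
  have pv: "P.prob {\<omega>\<in>space M. emeasure (N v \<omega>) (A v) = 0} \<le> exp (- (T * C 0 * \<sigma>0) / 2 ^ Suc (length v))"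
    if "v \<in> tree_V" for v
  proof -
    interpret I: prmI M \<sigma> "N v" by (rule prmI[OF that])
    have em: "emeasure (intensity \<sigma>) (A v) = ennreal ((hi (length v) - lo (length v)) * cv v * \<sigma>0)"
    proof -
      have e: "I.\<sigma>0 = \<sigma>0" by (simp add: I.\<sigma>0_def \<sigma>0_def)
      show ?thesis unfolding A_def e[symmetric]
        using lo0[of "length v"] lohi[of "length v"] cvpos[of v] by (intro I.box_meas_Ioc) auto
    qed
    have "P.prob {\<omega>\<in>space M. emeasure (N v \<omega>) (A v) = 0} = exp (- ((hi (length v) - lo (length v)) * cv v * \<sigma>0))"
      using I.p0[OF Asets] em lo0 lohi cvpos \<sigma>0pos by (simp add: less_imp_le)
    also have "\<dots> \<le> exp (- (T * C 0 * \<sigma>0) / 2 ^ Suc (length v))"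
      unfolding hilo using cv0[of v] T0 \<sigma>0pos by (simp add: divide_simps mult_right_mono)
    finally show ?thesis .
  qed
  define \<kappa> where "\<kappa> = T * C 0 * \<sigma>0"
  have \<kappa>0: "0 < \<kappa>" unfolding \<kappa>_def using T0 Cpos \<sigma>0pos by simp
  define ch where "ch v = (\<lambda>j. v @ [j]) ` {..<4 ^ length v}" for v :: "nat list"
  define Bad where "Bad k = (\<Union>v\<in>D k. {\<omega>\<in>space M. \<forall>w\<in>ch v. emeasure (N w \<omega>) (A w) = 0})" for k
  have Ev: "{\<omega>\<in>space M. emeasure (N w \<omega>) (A w) = 0} \<in> sets M" if "w \<in> tree_V" for w
  proof -
    interpret I: prmI M \<sigma> "N w" by (rule prmI[OF that])
    show ?thesis by (rule I.ev_eq[OF Asets])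
  qed
  have chV: "ch v \<subseteq> tree_V" if "v \<in> tree_V" for v
    unfolding ch_def using child_in[OF that] by auto
  have chne: "ch v \<noteq> {}" for v unfolding ch_def by (auto simp: lessThan_empty_iff)
  have chfin: "finite (ch v)" for v unfolding ch_def by simp
  have chcard: "card (ch v) = 4 ^ length v" for v
    unfolding ch_def by (subst card_image) (auto simp: inj_on_def)
  have chlen: "w \<in> ch v \<Longrightarrow> length w = Suc (length v)" for w v unfolding ch_def by auto
  have evs: "{\<omega>\<in>space M. \<forall>w\<in>ch v. emeasure (N w \<omega>) (A w) = 0} \<in> sets M" if "v \<in> tree_V" for v
  proof -
    have "{\<omega>\<in>space M. \<forall>w\<in>ch v. emeasure (N w \<omega>) (A w) = 0}
        = (\<Inter>w\<in>ch v. {\<omega>\<in>space M. emeasure (N w \<omega>) (A w) = 0})"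
      using chne[of v] by auto
    also have "\<dots> \<in> sets M"
      using chfin chne chV[OF that] Ev by (intro sets.finite_INT) auto
    finally show ?thesis .
  qed
  have DV: "v \<in> D k \<Longrightarrow> v \<in> tree_V" for v k unfolding D_def by auto
  have Dfin: "finite (D k)" for k using D_fin_card by auto
  have Bads: "Bad k \<in> sets M" for k
    unfolding Bad_def using Dfin evs DV by (intro sets.finite_UN) auto
  have Badp: "P.prob (Bad k) \<le> 4 ^ (k * k) * exp (- \<kappa> * 2 ^ k / 4)" for k
  proof -
    have "P.prob (Bad k) \<le> (\<Sum>v\<in>D k. P.prob {\<omega>\<in>space M. \<forall>w\<in>ch v. emeasure (N w \<omega>) (A w) = 0})"
      unfolding Bad_def using evs DV by (intro P.finite_measure_subadditive_finite Dfin) auto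
    also have "\<dots> \<le> (\<Sum>v\<in>D k. exp (- \<kappa> * 2 ^ k / 4))"
    proof (intro sum_mono)
      fix v assume v: "v \<in> D k"
      have "P.prob {\<omega>\<in>space M. \<forall>w\<in>ch v. emeasure (N w \<omega>) (A w) = 0}
          = (\<Prod>w\<in>ch v. P.prob {\<omega>\<in>space M. emeasure (N w \<omega>) (A w) = 0})"
        using chfin chne chV[OF DV[OF v]] Asets by (intro indep_zero[OF Pm ind]) auto
      also have "\<dots> \<le> (\<Prod>w\<in>ch v. exp (- \<kappa> / 2 ^ Suc (Suc k)))"
      proof (intro prod_mono conjI)
        fix w assume w: "w \<in> ch v"
        have "length w = Suc k" using chlen[OF w] v unfolding D_def by auto
        then show "P.prob {\<omega>\<in>space M. emeasure (N w \<omega>) (A w) = 0} \<le> exp (- \<kappa> / 2 ^ Suc (Suc k))"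
          using pv[of w] chV[OF DV[OF v]] w unfolding \<kappa>_def by auto
      qed simp
      also have "\<dots> = exp (- \<kappa> / 2 ^ Suc (Suc k)) ^ (4 ^ k)"
        using chcard[of v] v unfolding D_def by simp
      also have "\<dots> = exp (real (4 ^ k) * (- \<kappa> / 2 ^ Suc (Suc k)))"
        by (rule exp_of_nat_mult[symmetric])
      also have "real (4 ^ k) * (- \<kappa> / 2 ^ Suc (Suc k)) = - \<kappa> * 2 ^ k / 4"
      proof -
        have "(4::real) ^ k = 2 ^ k * 2 ^ k" by (simp flip: power_mult_distrib)
        then show ?thesis by (simp add: field_simps)
      qed
      finally show "P.prob {\<omega>\<in>space M. \<forall>w\<in>ch v. emeasure (N w \<omega>) (A w) = 0} \<le> exp (- \<kappa> * 2 ^ k / 4)" .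
    qed
    also have "\<dots> = real (card (D k)) * exp (- \<kappa> * 2 ^ k / 4)" by simp
    also have "\<dots> \<le> 4 ^ (k * k) * exp (- \<kappa> * 2 ^ k / 4)"
    proof (intro mult_right_mono)
      have "card (D k) \<le> 4 ^ (k * k)" using D_fin_card by auto
      then show "real (card (D k)) \<le> 4 ^ (k * k)" by (metis of_nat_le_iff of_nat_numeral of_nat_power)
    qed simp
    finally show ?thesis .
  qed
  have BC: "AE \<omega> in M. eventually (\<lambda>n. \<omega> \<in> space M - Bad n) sequentially"
  proof (rule borel_cantelli_AE1)
    show "summable (\<lambda>n. measure M (Bad n))"
      by (rule summable_comparison_test'[OF summ[OF \<kappa>0], of 0]) (use Badp in auto)
  qed (use Bads in \<open>auto simp: P.emeasure_eq_measure\<close>)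
  have AT: "AE \<omega> in M. \<forall>v\<in>tree_V. emeasure (N v \<omega>) (A v) \<noteq> 0 \<longrightarrow>
      (\<exists>s. lo (length v) < s \<and> s \<le> hi (length v) \<and> NT_atom C (\<lambda>x. N x \<omega>) v s)"
  proof (rule AE_ball_countable')
    show "countable tree_V" by simp
    fix v assume v: "v \<in> tree_V"
    interpret I: prmI M \<sigma> "N v" by (rule prmI[OF v])
    show "AE \<omega> in M. emeasure (N v \<omega>) (A v) \<noteq> 0 \<longrightarrow>
      (\<exists>s. lo (length v) < s \<and> s \<le> hi (length v) \<and> NT_atom C (\<lambda>x. N x \<omega>) v s)"
      unfolding A_def NT_atom_def cv_def[symmetric]
      using lo0 lohi cvpos by (intro I.atom_AE) (auto simp: less_imp_le)
  qed
  show ?thesis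
    using BC AT AE_space
  proof eventually_elim
    case (elim \<omega>)
    from elim(1) obtain j0 where j0: "\<And>n. n \<ge> j0 \<Longrightarrow> \<omega> \<notin> Bad n"
      unfolding eventually_sequentially by auto
    have \<omega>: "\<omega> \<in> space M" by fact
    define op where "op w \<longleftrightarrow> emeasure (N w \<omega>) (A w) \<noteq> 0" for w
    have exch: "\<exists>j<4 ^ length v. op (v @ [j])" if "v \<in> D m" "m \<ge> j0" for v m
    proof (rule ccontr)
      assume "\<not> ?thesis"
      then have "\<omega> \<in> Bad m" unfolding Bad_def ch_def op_def using that \<omega> by auto
      with j0[OF that(2)] show False by simp
    qed
    define nxt where "nxt v = (SOME w. \<exists>j<4 ^ length v. w = v @ [j] \<and> op w)" for v
    have nxt: "\<exists>j<4 ^ length v. nxt v = v @ [j] \<and> op (nxt v)" if "v \<in> D m" "m \<ge> j0" for v m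
    proof -
      have "\<exists>w. \<exists>j<4 ^ length v. w = v @ [j] \<and> op w" using exch[OF that] by auto
      then show ?thesis unfolding nxt_def by (rule someI_ex[where P = "\<lambda>w. \<exists>j<4 ^ length v. w = v @ [j] \<and> op w", THEN exE]) auto
    qed
    define v0 where "v0 = replicate j0 (0::nat)"
    have v0: "v0 \<in> D j0" unfolding v0_def D_def tree_V_def by auto
    define p where "p n = (nxt ^^ Suc n) v0" for n
    have pS: "p (Suc n) = nxt (p n)" for n unfolding p_def by simp
    have p0: "p 0 = nxt v0" unfolding p_def by simp
    have pD: "p n \<in> D (Suc (j0 + n)) \<and> op (p n)" for n
    proof (induction n)
      case 0
      obtain j where "j < 4 ^ length v0" "nxt v0 = v0 @ [j]" "op (nxt v0)" using nxt[OF v0] by auto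
      then show ?case using v0 unfolding p0 D_def by (auto intro: child_in)
    next
      case (Suc n)
      obtain j where "j < 4 ^ length (p n)" "nxt (p n) = p n @ [j]" "op (nxt (p n))"
        using nxt[of "p n" "Suc (j0 + n)"] Suc by auto
      then show ?case using Suc unfolding pS D_def by (auto intro: child_in)
    qed
    have pV: "p n \<in> tree_V" for n using pD[of n] unfolding D_def by auto
    have plen: "length (p n) = Suc (j0 + n)" for n using pD[of n] unfolding D_def by auto
    have padj: "tree_adj (p (Suc n)) (p n)" for n
    proof -
      obtain j where "j < 4 ^ length (p n)" "nxt (p n) = p n @ [j]"
        using nxt[of "p n" "Suc (j0 + n)"] pD[of n] by auto
      then show ?thesis unfolding pS using child_adj[OF pV] by auto
    qed
    have "\<exists>t. lo (length (p n)) < t \<and> t \<le> hi (length (p n)) \<and> NT_atom C (\<lambda>x. N x \<omega>) (p n) t" for n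
      using elim(2) pV[of n] pD[of n] unfolding op_def by auto
    then obtain t where t: "\<And>n. lo (Suc (j0 + n)) < t n" "\<And>n. t n \<le> hi (Suc (j0 + n))"
        "\<And>n. NT_atom C (\<lambda>x. N x \<omega>) (p n) (t n)"
      unfolding plen by metis
    have tdec: "t (Suc n) < t n" for n
      using t(2)[of "Suc n"] t(1)[of n] hiSuc[of "Suc (j0 + n)"] by simp
    have tpos: "0 < t n" for n using t(1)[of n] lo0[of "Suc (j0 + n)"] by simp
    have tT: "t n \<le> T" for n using t(2)[of n] hiT[of "Suc (j0 + n)"] by simp
    have injp: "inj p"
      by (rule injI) (metis plen add_left_cancel nat.inject)
    show ?case
    proof (intro exI conjI)
      show "p 0 \<in> tree_V" by (rule pV)
      show "infinite_causal_chain tree_adj (\<lambda>v s. NT_atom C (\<lambda>x. N x \<omega>) v s) T (p 0) p"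
        unfolding infinite_causal_chain_def
      proof (intro conjI allI)
        show "inj p" by (rule injp)
        fix n
        define ws where "ws = rev (map p [0..<Suc n])"
        have wl: "length ws = Suc n" unfolding ws_def by simp
        have wn: "ws ! i = p (n - i)" if "i < Suc n" for i
          unfolding ws_def using that by (simp add: rev_nth nth_map del: upt_Suc)
        show "causal_chain tree_adj (\<lambda>v s. NT_atom C (\<lambda>x. N x \<omega>) v s) 0 T (rev (map p [0..<Suc n]))"
          unfolding ws_def[symmetric] causal_chain_def
        proof (intro conjI impI allI)
          show "ws \<noteq> []" using wl by auto
          show "distinct ws" unfolding ws_def using injp
            by (simp add: distinct_map inj_on_subset[OF injp] del: upt_Suc)
          fix i assume i: "Suc i < length ws"
          then have "ws ! i = p (Suc (n - Suc i))" "ws ! Suc i = p (n - Suc i)"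
            using wn wl by (auto simp: Suc_diff_Suc)
          then show "tree_adj (ws ! i) (ws ! Suc i)" using padj by simp
        next
          assume "2 \<le> length ws"
          define s where "s i = (if i = 0 then 0 else t (n - i))" for i
          show "\<exists>s. s 0 = 0 \<and> (\<forall>i. Suc i < length ws \<longrightarrow> s i < s (Suc i)) \<and> s (length ws - 1) \<le> T \<and>
             (\<forall>i. 1 \<le> i \<and> i < length ws \<longrightarrow> NT_atom C (\<lambda>x. N x \<omega>) (ws ! i) (s i))"
          proof (intro exI[of _ s] conjI allI impI)
            show "s 0 = 0" unfolding s_def by simp
            fix i assume i: "Suc i < length ws"
            show "s i < s (Suc i)"
            proof (cases "i = 0")
              case True then show ?thesis unfolding s_def using tpos by simp
            next
              case False
              then have "n - i = Suc (n - Suc i)" using i wl by auto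
              then show ?thesis unfolding s_def using False tdec[of "n - Suc i"] by simp
            qed
          next
            show "s (length ws - 1) \<le> T" unfolding s_def wl using tT T0 by auto
          next
            fix i assume i: "1 \<le> i \<and> i < length ws"
            then show "NT_atom C (\<lambda>x. N x \<omega>) (ws ! i) (s i)"
              unfolding s_def using wn[of i] wl t(3)[of "n - i"] by auto
          qed
        qed
      qed simp
    qed
  qed
qed


end
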